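(* Let $\theta_1,\dots,\theta_m$ be i.i.d. random variables uniformly distributed on $[0,1]$. If $m\ge 20$, then $$\mathbb{E}\left[\min_{j\in[m]}\left(\tfrac14-\theta_j\right)^2\right]\le \frac{1.01}{2(m+1)(m+2)}.$$ *)

theory Defs
  imports "HOL-Probability.Probability"
begin

end

theory Submission
  imports Defs
begin

definition pb :: "real \<Rightarrow> real" where
  "pb s = (if s \<le> 1/4 then 1 - 2 * s else (if s \<le> 3/4 then 1/2 else 0))"

lemma pb_nonneg: "0 \<le> s \<Longrightarrow> 0 \<le> pb s"
  by (simp add: pb_def)

lemma leb_bound:
  assumes "0 \<le> s"
  shows "emeasure lborel ({0..1::real} \<inter> {x. s \<le> \<bar>1/4 - x\<bar>}) \<le> ennreal (pb s)"
proof (cases "s \<le> 1/4")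
  case True
  have sub: "{0..1::real} \<inter> {x. s \<le> \<bar>1/4 - x\<bar>} \<subseteq> {0..1/4-s} \<union> {1/4+s..1}"
    by auto
  have "emeasure lborel ({0..1::real} \<inter> {x. s \<le> \<bar>1/4 - x\<bar>}) \<le> emeasure lborel ({0..1/4-s} \<union> {1/4+s..1})"
    by (rule emeasure_mono[OF sub]) simp
  also have "\<dots> \<le> emeasure lborel {0..1/4-s} + emeasure lborel {1/4+s..(1::real)}"
    by (rule emeasure_subadditive) auto
  also have "\<dots> = ennreal (1/4-s) + ennreal (3/4 - s)"
    using True by simp
  also have "\<dots> = ennreal (pb s)"
    using True assms by (simp add: pb_def ennreal_plus[symmetric])
  finally show ?thesis .
next
  case False
  show ?thesis
  proof (cases "s \<le> 3/4")
    case True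
    have sub: "{0..1::real} \<inter> {x. s \<le> \<bar>1/4 - x\<bar>} \<subseteq> {1/4+s..1}"
      using False by auto
    have "emeasure lborel ({0..1::real} \<inter> {x. s \<le> \<bar>1/4 - x\<bar>}) \<le> emeasure lborel {1/4+s..(1::real)}"
      by (rule emeasure_mono[OF sub]) simp
    also have "\<dots> = ennreal (3/4 - s)"
      using True by simp
    also have "\<dots> \<le> ennreal (pb s)"
      using True False by (intro ennreal_leI) (simp add: pb_def)
    finally show ?thesis .
  next
    case F2: False
    have "{0..1::real} \<inter> {x. s \<le> \<bar>1/4 - x\<bar>} = {}"
      using F2 by auto
    then show ?thesis by simp
  qed
qed

lemma var_bound:
  assumes "prob_space M" and D: "distributed M lborel X (indicator {0..1::real})" and "0 \<le> s"
  shows "measure M (X -` {x. s \<le> \<bar>1/4 - x\<bar>} \<inter> space M) \<le> pb s"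
proof -
  interpret prob_space M by fact
  have A: "{x. s \<le> \<bar>1/4 - x\<bar>} \<in> sets lborel" by measurable
  have "emeasure M (X -` {x. s \<le> \<bar>1/4 - x\<bar>} \<inter> space M)
      = (\<integral>\<^sup>+x. indicator {0..1::real} x * indicator {x. s \<le> \<bar>1/4 - x\<bar>} x \<partial>lborel)"
    by (rule distributed_emeasure[OF D A])
  also have "\<dots> = (\<integral>\<^sup>+x. indicator ({0..1::real} \<inter> {x. s \<le> \<bar>1/4 - x\<bar>}) x \<partial>lborel)"
    by (intro nn_integral_cong) (simp add: indicator_inter_arith)
  also have "\<dots> = emeasure lborel ({0..1::real} \<inter> {x. s \<le> \<bar>1/4 - x\<bar>})"
    using A by (intro nn_integral_indicator) auto
  also have "\<dots> \<le> ennreal (pb s)" by (rule leb_bound[OF assms(3)])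
  finally show ?thesis
    using pb_nonneg[OF assms(3)] by (simp add: emeasure_eq_measure)
qed


lemma prod_bound:
  assumes "prob_space M"
    and ind: "prob_space.indep_vars M (\<lambda>_. borel) \<theta> {1..m}"
    and D: "\<And>j. j \<in> {1..m} \<Longrightarrow> distributed M lborel (\<theta> j) (indicator {0..1::real})"
    and m: "m \<ge> 1" and s: "0 \<le> s"
  shows "measure M {\<omega>\<in>space M. \<forall>j\<in>{1..m}. s \<le> \<bar>1/4 - \<theta> j \<omega>\<bar>} \<le> pb s ^ m"
proof -
  interpret prob_space M by fact
  let ?A = "{x::real. s \<le> \<bar>1/4 - x\<bar>}"
  have A: "?A \<in> sets borel" by measurable
  have eq: "{\<omega>\<in>space M. \<forall>j\<in>{1..m}. s \<le> \<bar>1/4 - \<theta> j \<omega>\<bar>} = (\<Inter>j\<in>{1..m}. \<theta> j -` ?A \<inter> space M)"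
    using m by auto
  have "prob (\<Inter>j\<in>{1..m}. \<theta> j -` ?A \<inter> space M) = (\<Prod>j\<in>{1..m}. prob (\<theta> j -` ?A \<inter> space M))"
    using ind unfolding indep_vars_def2
    by (intro indep_setsD[where F="\<lambda>i. {\<theta> i -` A \<inter> space M | A. A \<in> sets borel}" and I="{1..m}"])
       (use m A in \<open>auto intro!: exI[of _ ?A]\<close>)
  also have "\<dots> \<le> (\<Prod>j\<in>{1..m}. pb s)"
    by (intro prod_mono conjI measure_nonneg var_bound[OF assms(1) D s]) auto
  also have "\<dots> = pb s ^ m" by simp
  finally show ?thesis using eq by simp
qed

lemma int1:
  "((\<lambda>s::real. 2 * s * (1 - 2 * s) ^ m) has_integral 1 / (2 * (real m + 1) * (real m + 2))) {0..1/2}"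
proof -
  define H where "H = (\<lambda>s::real. - ((1 - 2 * s) ^ (m+1)) / (2 * (real m + 1)) + (1 - 2 * s) ^ (m+2) / (2 * (real m + 2)))"
  have d: "(H has_real_derivative 2 * s * (1 - 2 * s) ^ m) (at s)" for s
  proof -
    have "(H has_real_derivative
        - (real (m+1) * (1 - 2 * s) ^ m * (0 - 2)) / (2 * (real m + 1))
        + real (m+2) * (1 - 2 * s) ^ (m+1) * (0 - 2) / (2 * (real m + 2))) (at s)"
      unfolding H_def
      by (intro derivative_eq_intros) (auto simp: mult_ac)
    moreover have "- (real (m+1) * (1 - 2 * s) ^ m * (0 - 2)) / (2 * (real m + 1))
        + real (m+2) * (1 - 2 * s) ^ (m+1) * (0 - 2) / (2 * (real m + 2)) = 2 * s * (1 - 2 * s) ^ m"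
    proof -
      define X where "X = (1 - 2 * s) ^ m"
      have e1: "- (real (m+1) * X * (0 - 2)) / (2 * (real m + 1)) = X"
        by (simp add: field_simps)
      have e2: "real (m+2) * ((1 - 2 * s) * X) * (0 - 2) / (2 * (real m + 2)) = - ((1 - 2 * s) * X)"
        by (simp add: field_simps)
      show ?thesis using e1 e2 unfolding X_def by (simp add: algebra_simps)
    qed
    ultimately show ?thesis by simp
  qed
  have "((\<lambda>s::real. 2 * s * (1 - 2 * s) ^ m) has_integral (H (1/2) - H 0)) {0..1/2}"
    by (intro fundamental_theorem_of_calculus)
       (auto intro!: has_real_derivative_iff_has_vector_derivative[THEN iffD1, OF DERIV_subset[OF d]])
  moreover have "H (1/2) - H 0 = 1 / (2 * (real m + 1) * (real m + 2))"
  proof -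
    have n1: "real m + 1 > 0" "real m + 2 > 0" by linarith+
    have "H (1/2) - H 0 = 1 / (2 * (real m + 1)) - 1 / (2 * (real m + 2))"
      unfolding H_def by simp
    also have "\<dots> = 1 / (2 * (real m + 1) * (real m + 2))"
      using n1 by (simp add: divide_simps)
    finally show ?thesis .
  qed
  ultimately show ?thesis by simp
qed

lemma int2:
  "((\<lambda>s::real. 2 * s * (1/2) ^ m) has_integral (1/2)^m / 2) {1/4..3/4}"
proof -
  define H where "H = (\<lambda>s::real. s^2 * (1/2) ^ m)"
  have d: "(H has_real_derivative 2 * s * (1/2) ^ m) (at s)" for s
    unfolding H_def by (auto intro!: derivative_eq_intros)
  have "((\<lambda>s::real. 2 * s * (1/2) ^ m) has_integral (H (3/4) - H (1/4))) {1/4..3/4}"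
    by (intro fundamental_theorem_of_calculus)
       (auto intro!: has_real_derivative_iff_has_vector_derivative[THEN iffD1, OF DERIV_subset[OF d]])
  moreover have "H (3/4) - H (1/4) = (1/2)^m / 2"
    unfolding H_def by (simp add: field_simps power2_eq_square)
  ultimately show ?thesis by simp
qed

lemma int_sq:
  assumes "0 \<le> a"
  shows "((\<lambda>s::real. 2 * s) has_integral a^2) {0..a}"
proof -
  have "((\<lambda>s::real. 2 * s) has_integral (a^2 - 0^2)) {0..a}"
    using assms
    by (intro fundamental_theorem_of_calculus)
       (auto simp: has_real_derivative_iff_has_vector_derivative[symmetric] intro!: derivative_eq_intros)
  then show ?thesis by simp
qed

lemma num_bound: "m \<ge> 20 \<Longrightarrow> 100 * (m+1) * (m+2) \<le> (2::nat) ^ m"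
proof (induction m rule: dec_induct)
  case base
  then show ?case by simp
next
  case (step n)
  have "100 * (Suc n + 1) * (Suc n + 2) \<le> 2 * (100 * (n+1) * (n+2))"
    using step by (simp add: algebra_simps)
  also have "\<dots> \<le> 2 * 2^n" using step by simp
  finally show ?case by simp
qed


theorem lemma1:
  fixes M :: "'a measure" and \<theta> :: "nat \<Rightarrow> 'a \<Rightarrow> real" and m :: nat
  assumes "prob_space M"
    and "prob_space.indep_vars M (\<lambda>_. borel) \<theta> {1..m}"
    and "\<And>j. j \<in> {1..m} \<Longrightarrow> distributed M lborel (\<theta> j) (indicator {0..1::real})"
    and "m \<ge> 20"
  shows "prob_space.expectation M (\<lambda>\<omega>. Min ((\<lambda>j. (1/4 - \<theta> j \<omega>)^2) ` {1..m}))
           \<le> 1.01 / (2 * (real m + 1) * (real m + 2))"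
proof -
  interpret prob_space M by fact
  have m1: "m \<ge> 1" using assms(4) by simp
  have ne: "{1..m} \<noteq> {}" using m1 by simp
  have meas: "\<theta> j \<in> borel_measurable M" if "j \<in> {1..m}" for j
    using distributed_measurable[OF assms(3)[OF that]] by simp
  define Y where "Y \<omega> = Min ((\<lambda>j. (1/4 - \<theta> j \<omega>)^2) ` {1..m})" for \<omega>
  have Ymeas[measurable]: "Y \<in> borel_measurable M"
    unfolding Y_def
    by (rule borel_measurable_Min) (use meas in auto)
  have Ynn: "0 \<le> Y \<omega>" for \<omega>
    unfolding Y_def using ne by (simp add: Min_ge_iff)
  have Yiff: "s\<^sup>2 \<le> Y \<omega> \<longleftrightarrow> (\<forall>j\<in>{1..m}. s \<le> \<bar>1/4 - \<theta> j \<omega>\<bar>)" if "0 \<le> s" for s \<omega>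
  proof -
    have "s\<^sup>2 \<le> (1/4 - \<theta> j \<omega>)^2 \<longleftrightarrow> s \<le> \<bar>1/4 - \<theta> j \<omega>\<bar>" for j
      using that abs_le_square_iff[of s "1/4 - \<theta> j \<omega>"] by simp
    then show ?thesis unfolding Y_def using ne by (simp add: Min_ge_iff)
  qed
  define F where "F \<omega> s = (if 0 \<le> s \<and> s\<^sup>2 \<le> Y \<omega> then ennreal (2 * s) else 0)" for \<omega> s
  have Fmeas: "case_prod F \<in> borel_measurable (M \<Otimes>\<^sub>M lborel)"
    unfolding F_def by measurable
  have step1: "(\<integral>\<^sup>+s. F \<omega> s \<partial>lborel) = ennreal (Y \<omega>)" for \<omega>
  proof -
    have "F \<omega> s = ennreal (2 * s) * indicator {0..sqrt (Y \<omega>)} s" for s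
    proof (cases "0 \<le> s")
      case True
      have "s\<^sup>2 \<le> Y \<omega> \<longleftrightarrow> s \<le> sqrt (Y \<omega>)"
        using True Ynn[of \<omega>] real_le_rsqrt real_sqrt_le_iff[of "s\<^sup>2" "Y \<omega>"] by auto
      then show ?thesis using True by (auto simp: F_def indicator_def)
    qed (auto simp: F_def indicator_def)
    then have "(\<integral>\<^sup>+s. F \<omega> s \<partial>lborel) = (\<integral>\<^sup>+s. ennreal (2 * s) * indicator {0..sqrt (Y \<omega>)} s \<partial>lborel)"
      by simp
    also have "\<dots> = ennreal ((sqrt (Y \<omega>))\<^sup>2)"
      by (rule nn_integral_has_integral_lebesgue') (use int_sq[of "sqrt (Y \<omega>)"] Ynn[of \<omega>] in auto)
    also have "\<dots> = ennreal (Y \<omega>)" using Ynn[of \<omega>] by simp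
    finally show ?thesis .
  qed
  define G where "G s = (if s \<in> {0..1/2} then 2 * s * (1 - 2 * s) ^ m else 0)
     + (if s \<in> {1/4..3/4} then 2 * s * (1/2) ^ m else 0)" for s :: real
  have step3: "(\<integral>\<^sup>+\<omega>. F \<omega> s \<partial>M) \<le> ennreal (G s)" for s
  proof (cases "0 \<le> s")
    case False
    then show ?thesis by (simp add: F_def)
  next
    case True
    define E where "E = {\<omega>\<in>space M. \<forall>j\<in>{1..m}. s \<le> \<bar>1/4 - \<theta> j \<omega>\<bar>}"
    have Esets: "E \<in> sets M"
    proof -
      have "E = {\<omega>\<in>space M. s\<^sup>2 \<le> Y \<omega>}" unfolding E_def using Yiff[OF True] by auto
      also have "\<dots> \<in> sets M" by measurable
      finally show ?thesis .
    qed
    have "(\<integral>\<^sup>+\<omega>. F \<omega> s \<partial>M) = (\<integral>\<^sup>+\<omega>. ennreal (2 * s) * indicator E \<omega> \<partial>M)"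
      by (intro nn_integral_cong) (auto simp: F_def E_def indicator_def Yiff[OF True] True)
    also have "\<dots> = ennreal (2 * s) * emeasure M E"
      by (rule nn_integral_cmult_indicator[OF Esets])
    also have "\<dots> = ennreal (2 * s * measure M E)"
      using True by (simp add: emeasure_eq_measure ennreal_mult)
    also have "\<dots> \<le> ennreal (2 * s * pb s ^ m)"
      using prod_bound[OF assms(1) assms(2) assms(3) m1 True] True
      unfolding E_def by (intro ennreal_leI mult_left_mono) auto
    also have "\<dots> \<le> ennreal (G s)"
    proof (intro ennreal_leI)
      have a: "0 \<le> 2 * s * (1 - 2 * s) ^ m" if "s \<le> 1/2" using that True by simp
      have b: "0 \<le> 2 * s * (1/2::real) ^ m" using True by simp
      show "2 * s * pb s ^ m \<le> G s"
        using a b True m1 unfolding G_def pb_def by (auto simp: power_0_left)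
    qed
    finally show ?thesis .
  qed
  have Gint: "(G has_integral (1 / (2 * (real m + 1) * (real m + 2)) + (1/2)^m / 2)) UNIV"
    unfolding G_def
    by (intro has_integral_add has_integral_restrict_UNIV[THEN iffD2] int1 int2)
  have step4: "(\<integral>\<^sup>+s. ennreal (G s) \<partial>lborel) = ennreal (1 / (2 * (real m + 1) * (real m + 2)) + (1/2)^m / 2)"
  proof (rule nn_integral_has_integral_lborel[OF _ _ Gint])
    show "G \<in> borel_measurable borel" unfolding G_def by measurable
    show "0 \<le> G s" for s unfolding G_def by auto
  qed
  interpret P: pair_sigma_finite M lborel
    by (intro pair_sigma_finite.intro prob_space_imp_sigma_finite assms(1) lborel.sigma_finite_measure_axioms)
  have "(\<integral>\<^sup>+\<omega>. ennreal (Y \<omega>) \<partial>M) = (\<integral>\<^sup>+\<omega>. (\<integral>\<^sup>+s. F \<omega> s \<partial>lborel) \<partial>M)"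
    by (simp add: step1)
  also have "\<dots> = (\<integral>\<^sup>+s. (\<integral>\<^sup>+\<omega>. F \<omega> s \<partial>M) \<partial>lborel)"
    by (rule P.Fubini'[OF Fmeas, symmetric])
  also have "\<dots> \<le> (\<integral>\<^sup>+s. ennreal (G s) \<partial>lborel)"
    by (intro nn_integral_mono step3)
  also have "\<dots> = ennreal (1 / (2 * (real m + 1) * (real m + 2)) + (1/2)^m / 2)"
    by (rule step4)
  finally have le: "(\<integral>\<^sup>+\<omega>. ennreal (Y \<omega>) \<partial>M) \<le> ennreal (1 / (2 * (real m + 1) * (real m + 2)) + (1/2)^m / 2)" .
  have "expectation Y = enn2real (\<integral>\<^sup>+\<omega>. ennreal (Y \<omega>) \<partial>M)"
    by (rule integral_eq_nn_integral) (auto simp: Ynn)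
  also have "\<dots> \<le> enn2real (ennreal (1 / (2 * (real m + 1) * (real m + 2)) + (1/2)^m / 2))"
    by (rule enn2real_mono[OF le]) simp
  also have "\<dots> = 1 / (2 * (real m + 1) * (real m + 2)) + (1/2)^m / 2"
    by (intro enn2real_ennreal) (simp add: zero_le_divide_iff)
  also have "\<dots> \<le> 1.01 / (2 * (real m + 1) * (real m + 2))"
  proof -
    have nb: "100 * (real m + 1) * (real m + 2) \<le> 2 ^ m"
      using num_bound[OF assms(4)] by (metis (mono_tags) of_nat_le_iff of_nat_mult of_nat_add of_nat_1 of_nat_numeral of_nat_power)
    have pos: "0 < 2 * (real m + 1) * (real m + 2)" by simp
    have "(1/2::real)^m / 2 \<le> 0.01 / (2 * (real m + 1) * (real m + 2))"
      using nb pos by (simp add: divide_simps power_one_over) (simp add: algebra_simps)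
    moreover have "1.01 / (2 * (real m + 1) * (real m + 2)) = 1 / (2 * (real m + 1) * (real m + 2)) + 0.01 / (2 * (real m + 1) * (real m + 2))"
      by (simp add: add_divide_distrib[symmetric])
    ultimately show ?thesis by linarith
  qed
  finally show ?thesis unfolding Y_def .
qed

end
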